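(* Regard $\mathscr B_{\mathbf s,\boldsymbol\varepsilon}$ as a subalgebra of $\mathscr Y_{\mathbf s}$ via $b_{ij}(u)\mapsto\sum_{a}\varepsilon_a t_{ia}(u)t'_{aj}(-u)$. Then $\mathscr B_{\mathbf s,\boldsymbol\varepsilon}$ is a left coideal subalgebra of $\mathscr Y_{\mathbf s}$, i.e. $\Delta(\mathscr B_{\mathbf s,\boldsymbol\varepsilon})\subset\mathscr Y_{\mathbf s}\otimes\mathscr B_{\mathbf s,\boldsymbol\varepsilon}$; explicitly, $$\Delta(b_{ij}(u))=\sum_{a,c=1}^\kappa (-1)^{(|c|+|j|)(|a|+|c|)}\,t_{ia}(u)t_{cj}'(-u)\otimes b_{ac}(u).$$
   Context: Fix integers $m,n\ge0$, $\kappa=m+n$, a parity sequence $\mathbf s\in\{\pm1\}^\kappa$ with exactly $m$ entries $1$, $s_i=(-1)^{|i|}$; $V=\mathbb C^{m|n}$ with basis $v_i$ of parity $|i|$, matrix units $E_{ij}$. The super Yangian $\mathscr Y_{\mathbf s}$ is generated by $t_{ij}^{(r)}$ ($r\ge1$) of parity $|i|+|j|$ with relations $[t_{ij}(u),t_{kl}(v)]=\frac{(-1)^{|i||j|+|i||k|+|j||k|}}{u-v}(t_{kj}(u)t_{il}(v)-t_{kj}(v)t_{il}(u))$, $t_{ij}(u)=\delta_{ij}+\sum_{r\ge1}t_{ij}^{(r)}u^{-r}$; it is a Hopf superalgebra with $\Delta(t_{ij}(u))=\sum_k t_{ik}(u)\otimes t_{kj}(u)$. With $T(u)=\sum(-1)^{|i||j|+|j|}t_{ij}(u)\otimes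 E_{ij}$, the series $t'_{ij}(u)$ are defined by $T(u)^{-1}=\sum(-1)^{|i||j|+|j|}t'_{ij}(u)\otimes E_{ij}$. Fix $\boldsymbol\varepsilon\in\{\pm1\}^\kappa$. The twisted super Yangian $\mathscr B_{\mathbf s,\boldsymbol\varepsilon}$ is generated by $b_{ij}^{(r)}$ with $b_{ij}(u)=\delta_{ij}\varepsilon_i+\sum_{r\ge1}b_{ij}^{(r)}u^{-r}$, $B(u)=\sum(-1)^{|i||j|+|j|}b_{ij}(u)\otimes E_{ij}$, and relations $R(u-v)B_1(u)R(u+v)B_2(v)=B_2(v)R(u+v)B_1(u)R(u-v)$, $B(u)B(-u)=1$, where $R(u)=1-\frac1u\sum_{i,j}s_jE_{ij}\otimes E_{ji}$; the map $b_{ij}(u)\mapsto\sum_a\varepsilon_at_{ia}(u)t'_{aj}(-u)$ is an injective superalgebra homomorphism $\mathscr B_{\mathbf s,\boldsymbol\varepsilon}\to\mathscr Y_{\mathbf s}$. *)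

theory Defs
  imports Complex_Main "HOL-Library.Poly_Mapping"
begin

type_synonym 'g fa = "'g list \<Rightarrow>\<^sub>0 complex"

definition fa_const :: "complex \<Rightarrow> 'g fa" where
  "fa_const c = Poly_Mapping.single [] c"

definition fa_gen :: "'g \<Rightarrow> 'g fa" where
  "fa_gen g = Poly_Mapping.single [g] 1"

definition fa_mult :: "'g fa \<Rightarrow> 'g fa \<Rightarrow> 'g fa" (infixl \<open>\<cdot>\<close> 70) where
  "p \<cdot> q = (\<Sum>v\<in>Poly_Mapping.keys p. \<Sum>w\<in>Poly_Mapping.keys q. Poly_Mapping.single (v @ w) (Poly_Mapping.lookup p v * Poly_Mapping.lookup q w))"

definition fa_prod :: "'g fa list \<Rightarrow> 'g fa" where
  "fa_prod xs = foldr fa_mult xs (fa_const 1)"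

definition fa_hom :: "('g \<Rightarrow> 'h fa) \<Rightarrow> 'g fa \<Rightarrow> 'h fa" where
  "fa_hom \<phi> p = (\<Sum>w\<in>Poly_Mapping.keys p. fa_const (Poly_Mapping.lookup p w) \<cdot> fa_prod (map \<phi> w))"

inductive_set ideal_gen :: "'g fa set \<Rightarrow> 'g fa set" for R :: "'g fa set" where
  gen: "r \<in> R \<Longrightarrow> r \<in> ideal_gen R"
| zero: "0 \<in> ideal_gen R"
| add: "x \<in> ideal_gen R \<Longrightarrow> y \<in> ideal_gen R \<Longrightarrow> x + y \<in> ideal_gen R"
| mult: "x \<in> ideal_gen R \<Longrightarrow> a \<cdot> x \<cdot> b \<in> ideal_gen R"

inductive_set subalg_gen :: "'g fa set \<Rightarrow> 'g fa set" for S :: "'g fa set" where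
  gen: "x \<in> S \<Longrightarrow> x \<in> subalg_gen S"
| const: "fa_const c \<in> subalg_gen S"
| add: "x \<in> subalg_gen S \<Longrightarrow> y \<in> subalg_gen S \<Longrightarrow> x + y \<in> subalg_gen S"
| mult: "x \<in> subalg_gen S \<Longrightarrow> y \<in> subalg_gen S \<Longrightarrow> x \<cdot> y \<in> subalg_gen S"

text \<open>Generators t_ij^(r) are encoded as triples (i,j,r); only those with i,j < kappa and
  r \<ge> 1 are genuine generators, all other triples are set to 0 by the relations.\<close>
type_synonym ygen = "nat \<times> nat \<times> nat"

definition par :: "(nat \<Rightarrow> int) \<Rightarrow> nat \<Rightarrow> nat" where
  "par s i = (if s i = 1 then 0 else 1)"

definition sgn :: "nat \<Rightarrow> complex" where
  "sgn e = (-1) ^ e"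

definition kdelta :: "nat \<Rightarrow> nat \<Rightarrow> 'g fa" where
  "kdelta i j = (if i = j then fa_const 1 else 0)"

definition tc :: "nat \<Rightarrow> nat \<Rightarrow> nat \<Rightarrow> ygen fa" where
  "tc r i j = (if r = 0 then kdelta i j else fa_gen (i, j, r))"

definition scomm :: "nat \<Rightarrow> nat \<Rightarrow> 'g fa \<Rightarrow> 'g fa \<Rightarrow> 'g fa" where
  "scomm p q x y = x \<cdot> y - fa_const (sgn (p * q)) \<cdot> (y \<cdot> x)"

text \<open>Defining relations of Y_s, coefficientwise form of
  (u - v)[t_ij(u), t_kl(v)] = sign (t_kj(u) t_il(v) - t_kj(v) t_il(u)), i.e. for r,s \<ge> 0:
  [t_ij^(r+1), t_kl^(s)] - [t_ij^(r), t_kl^(s+1)] = sign (t_kj^(r) t_il^(s) - t_kj^(s) t_il^(r)).\<close>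
definition yang_rels :: "nat \<Rightarrow> (nat \<Rightarrow> int) \<Rightarrow> ygen fa set" where
  "yang_rels \<kappa> s =
     {scomm (par s i + par s j) (par s k + par s l) (tc (Suc r) i j) (tc q k l)
      - scomm (par s i + par s j) (par s k + par s l) (tc r i j) (tc (Suc q) k l)
      - fa_const (sgn (par s i * par s j + par s i * par s k + par s j * par s k))
          \<cdot> (tc r k j \<cdot> tc q i l - tc q k j \<cdot> tc r i l)
      | i j k l r q. i < \<kappa> \<and> j < \<kappa> \<and> k < \<kappa> \<and> l < \<kappa>}
   \<union> {fa_gen (i, j, r) | i j r. \<not> (i < \<kappa> \<and> j < \<kappa> \<and> 1 \<le> r)}"

definition yang_ideal :: "nat \<Rightarrow> (nat \<Rightarrow> int) \<Rightarrow> ygen fa set" where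
  "yang_ideal \<kappa> s = ideal_gen (yang_rels \<kappa> s)"

text \<open>Presented by two copies of the generators (Inl = first tensor factor, Inr = second),
  the relations of each copy, and the super-commutation relations
  (x \<otimes> 1)(1 \<otimes> y) = (-1)^{|x||y|} (1 \<otimes> y)(x \<otimes> 1) between generators.
  So x \<otimes> y corresponds to iota1 x \<cdot> iota2 y.\<close>
definition iota1 :: "ygen fa \<Rightarrow> (ygen + ygen) fa" where
  "iota1 = fa_hom (\<lambda>g. fa_gen (Inl g))"

definition iota2 :: "ygen fa \<Rightarrow> (ygen + ygen) fa" where
  "iota2 = fa_hom (\<lambda>g. fa_gen (Inr g))"

definition gpar :: "(nat \<Rightarrow> int) \<Rightarrow> ygen \<Rightarrow> nat" where
  "gpar s g = (case g of (i, j, r) \<Rightarrow> par s i + par s j)"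

definition tens_rels :: "nat \<Rightarrow> (nat \<Rightarrow> int) \<Rightarrow> (ygen + ygen) fa set" where
  "tens_rels \<kappa> s = iota1 ` yang_rels \<kappa> s \<union> iota2 ` yang_rels \<kappa> s
     \<union> {fa_gen (Inl g) \<cdot> fa_gen (Inr h)
          - fa_const (sgn (gpar s g * gpar s h)) \<cdot> (fa_gen (Inr h) \<cdot> fa_gen (Inl g)) | g h. True}"

definition tens_ideal :: "nat \<Rightarrow> (nat \<Rightarrow> int) \<Rightarrow> (ygen + ygen) fa set" where
  "tens_ideal \<kappa> s = ideal_gen (tens_rels \<kappa> s)"

definition delta_gen :: "nat \<Rightarrow> ygen \<Rightarrow> (ygen + ygen) fa" where
  "delta_gen \<kappa> g = (case g of (i, j, r) \<Rightarrow>
     (\<Sum>p\<le>r. \<Sum>k<\<kappa>. iota1 (tc p i k) \<cdot> iota2 (tc (r - p) k j)))"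

definition Delta :: "nat \<Rightarrow> ygen fa \<Rightarrow> (ygen + ygen) fa" where
  "Delta \<kappa> = fa_hom (delta_gen \<kappa>)"

text \<open>Coefficients t'_ij^(r) of the inverse matrix T(u)^{-1}; with the sign conventions of
  T(u) these satisfy sum_k t_ik(u) t'_kj(u) = delta_ij, i.e. t'^(0) = delta and for r \<ge> 1
  t'_ij^(r) = - sum_{p=1}^r sum_k t_ik^(p) t'_kj^(r-p).\<close>
fun tpc :: "nat \<Rightarrow> nat \<Rightarrow> nat \<Rightarrow> nat \<Rightarrow> ygen fa" where
  "tpc \<kappa> 0 i j = kdelta i j"
| "tpc \<kappa> (Suc r) i j =
     - (\<Sum>p\<in>{1..Suc r}. \<Sum>k<\<kappa>. tc p i k \<cdot> tpc \<kappa> (Suc r - p) k j)"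

text \<open>Coefficient of u^{-r} in b_ij(u) = sum_a eps_a t_ia(u) t'_aj(-u)
  (for r = 0 this is eps_i delta_ij).\<close>
definition bc :: "nat \<Rightarrow> (nat \<Rightarrow> int) \<Rightarrow> nat \<Rightarrow> nat \<Rightarrow> nat \<Rightarrow> ygen fa" where
  "bc \<kappa> \<epsilon> r i j = (\<Sum>a<\<kappa>. fa_const (of_int (\<epsilon> a)) \<cdot>
      (\<Sum>p\<le>r. fa_const (sgn (r - p)) \<cdot> (tc p i a \<cdot> tpc \<kappa> (r - p) a j)))"

definition twisted_subalg :: "nat \<Rightarrow> (nat \<Rightarrow> int) \<Rightarrow> ygen fa set" where
  "twisted_subalg \<kappa> \<epsilon> = subalg_gen {bc \<kappa> \<epsilon> r i j | r i j. 1 \<le> r \<and> i < \<kappa> \<and> j < \<kappa>}"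

end

theory Submission
  imports Defs "HOL-Computational_Algebra.Formal_Power_Series"
begin

instantiation list :: (type) monoid_add
begin
definition zero_list_def: "0 = []"
definition plus_list_def: "xs + ys = xs @ ys"
instance by standard (auto simp: zero_list_def plus_list_def)
end

lemma pm_sum_monomials: "(\<Sum>a\<in>Poly_Mapping.keys p. Poly_Mapping.single a (Poly_Mapping.lookup p a)) = p"
  by (rule poly_mapping_eqI) (simp add: lookup_sum lookup_single when_def in_keys_iff)

lemma fa_mult_eq: "fa_mult p q = p * q"
proof -
  have "p * q = (\<Sum>v\<in>Poly_Mapping.keys p. Poly_Mapping.single v (Poly_Mapping.lookup p v)) * (\<Sum>w\<in>Poly_Mapping.keys q. Poly_Mapping.single w (Poly_Mapping.lookup q w))"
    by (simp add: pm_sum_monomials)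
  also have "\<dots> = fa_mult p q"
    unfolding fa_mult_def sum_distrib_left sum_distrib_right mult_single
    by (simp add: plus_list_def sum_distrib_left sum.swap[of _ "Poly_Mapping.keys q"])
  finally show ?thesis by simp
qed

definition sc :: "complex \<Rightarrow> 'g fa" where "sc c = Poly_Mapping.single [] c"

lemma sc_single0: "sc c = Poly_Mapping.single 0 c" by (simp add: sc_def zero_list_def)
lemma fa_const_eq: "fa_const c = sc c" by (simp add: fa_const_def sc_def)
lemma sc_mult: "sc a * sc b = sc (a * b)" by (simp add: sc_single0 mult_single)
lemma sc_1[simp]: "sc 1 = 1" by (simp add: sc_single0)
lemma sc_0[simp]: "sc 0 = 0" by (simp add: sc_single0)
lemma sc_add: "sc (a + b) = sc a + sc b" by (simp add: sc_single0 single_add)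
lemma sc_uminus: "sc (- a) = - sc a" by (simp add: sc_single0 single_uminus)
lemma sc_power: "sc (a ^ n) = sc a ^ n"
  by (induct n) (simp_all only: power_0 power_Suc sc_1 flip: sc_mult)
lemma sc_of_int: "sc (of_int k) = of_int k" by (simp add: sc_single0)
lemma sc_sgn: "sc (sgn n) = (-1) ^ n" by (simp add: sgn_def sc_power sc_uminus)

lemma sc_central: "x * sc c = sc c * (x :: 'g fa)"
proof -
  have "x * sc c = (\<Sum>a\<in>Poly_Mapping.keys x. Poly_Mapping.single a (Poly_Mapping.lookup x a)) * sc c"
    by (simp add: pm_sum_monomials)
  also have "\<dots> = sc c * (\<Sum>a\<in>Poly_Mapping.keys x. Poly_Mapping.single a (Poly_Mapping.lookup x a))"
    unfolding sum_distrib_left sum_distrib_right sc_single0 mult_single by (simp add: mult.commute)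
  finally show ?thesis by (simp add: pm_sum_monomials)
qed

lemma sc_swap: "sc (a * b) * (X * Y) = sc a * X * (sc b * Y)"
proof -
  have "sc a * X * (sc b * Y) = sc a * (X * sc b) * Y" by (simp add: mult.assoc)
  also have "\<dots> = sc a * (sc b * X) * Y" by (simp only: sc_central)
  finally show ?thesis by (simp add: mult.assoc flip: sc_mult)
qed

lemma fa_prod_eq: "fa_prod xs = prod_list xs"
  by (induct xs) (simp_all add: fa_prod_def fa_const_eq fa_mult_eq)

lemma kdelta_eq: "kdelta i j = (if i = j then 1 else 0)"
  by (simp add: kdelta_def fa_const_eq)

lemma fa_gen_eq: "fa_gen g = Poly_Mapping.single [g] 1" by (simp add: fa_gen_def)

lemmas fa_conv = fa_mult_eq fa_const_eq fa_prod_eq kdelta_eq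

lemma tc_0[simp]: "tc 0 i j = (if i = j then 1 else 0)" by (simp add: tc_def kdelta_eq)
lemma tc_Suc[simp]: "tc (Suc r) i j = fa_gen (i, j, Suc r)" by (simp add: tc_def)

lemma tpc_0[simp]: "tpc \<kappa> 0 i j = (if i = j then 1 else 0)" by (simp add: kdelta_eq)

lemma fa_hom_eq: "fa_hom \<phi> p = (\<Sum>w\<in>Poly_Mapping.keys p. sc (Poly_Mapping.lookup p w) * prod_list (map \<phi> w))"
  by (simp add: fa_hom_def fa_conv)

lemma fa_hom_superset:
  assumes "finite S" "Poly_Mapping.keys p \<subseteq> S"
  shows "fa_hom \<phi> p = (\<Sum>w\<in>S. sc (Poly_Mapping.lookup p w) * prod_list (map \<phi> w))"
  unfolding fa_hom_eq
  by (rule sum.mono_neutral_left) (use assms in \<open>auto simp: in_keys_iff\<close>)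

lemma fa_hom_add: "fa_hom \<phi> (p + q) = fa_hom \<phi> p + fa_hom \<phi> q"
proof -
  let ?S = "Poly_Mapping.keys p \<union> Poly_Mapping.keys q"
  have f: "finite ?S" by simp
  have "fa_hom \<phi> (p + q) = (\<Sum>w\<in>?S. sc (Poly_Mapping.lookup (p + q) w) * prod_list (map \<phi> w))"
    by (rule fa_hom_superset[OF f]) (use keys_add[of p q] in auto)
  also have "\<dots> = (\<Sum>w\<in>?S. sc (Poly_Mapping.lookup p w) * prod_list (map \<phi> w))
       + (\<Sum>w\<in>?S. sc (Poly_Mapping.lookup q w) * prod_list (map \<phi> w))"
    by (simp add: lookup_add sc_add distrib_right sum.distrib)
  also have "\<dots> = fa_hom \<phi> p + fa_hom \<phi> q"
    by (simp add: fa_hom_superset[OF f, symmetric])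
  finally show ?thesis .
qed

lemma fa_hom_0[simp]: "fa_hom \<phi> 0 = 0" by (simp add: fa_hom_eq)

lemma fa_hom_uminus: "fa_hom \<phi> (- p) = - fa_hom \<phi> p"
  using fa_hom_add[of \<phi> "-p" p] by (simp add: eq_neg_iff_add_eq_0)

lemma fa_hom_diff: "fa_hom \<phi> (p - q) = fa_hom \<phi> p - fa_hom \<phi> q"
  using fa_hom_add[of \<phi> p "-q"] fa_hom_uminus[of \<phi> q] by simp

lemma fa_hom_sum: "fa_hom \<phi> (sum f A) = (\<Sum>a\<in>A. fa_hom \<phi> (f a))"
  by (induct A rule: infinite_finite_induct) (simp_all add: fa_hom_add)

lemma fa_hom_single: "fa_hom \<phi> (Poly_Mapping.single v c) = sc c * prod_list (map \<phi> v)"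
  by (subst fa_hom_superset[of "{v}"]) (auto simp: lookup_single)

lemma fa_hom_mult: "fa_hom \<phi> (p * q) = fa_hom \<phi> p * fa_hom \<phi> q"
proof -
  have "p * q = (\<Sum>v\<in>Poly_Mapping.keys p. \<Sum>w\<in>Poly_Mapping.keys q. Poly_Mapping.single (v @ w) (Poly_Mapping.lookup p v * Poly_Mapping.lookup q w))"
    by (simp add: fa_mult_eq[symmetric] fa_mult_def)
  then have "fa_hom \<phi> (p * q) = (\<Sum>v\<in>Poly_Mapping.keys p. \<Sum>w\<in>Poly_Mapping.keys q.
      (sc (Poly_Mapping.lookup p v) * prod_list (map \<phi> v)) * (sc (Poly_Mapping.lookup q w) * prod_list (map \<phi> w)))"
    by (simp add: fa_hom_sum fa_hom_single sc_swap)
  also have "\<dots> = fa_hom \<phi> p * fa_hom \<phi> q"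
    by (simp add: fa_hom_eq sum_distrib_left sum_distrib_right sum.swap[of _ "Poly_Mapping.keys q"])
  finally show ?thesis .
qed

lemma fa_hom_sc: "fa_hom \<phi> (sc c) = sc c"
  by (simp add: sc_def fa_hom_single)

lemma fa_hom_1[simp]: "fa_hom \<phi> 1 = 1" using fa_hom_sc[of \<phi> 1] by simp

lemma fa_hom_of_int: "fa_hom \<phi> (of_int k) = of_int k"
  using fa_hom_sc[of \<phi> "of_int k"] by (simp add: sc_of_int)

lemma fa_hom_power: "fa_hom \<phi> (x ^ n) = fa_hom \<phi> x ^ n"
  by (induct n) (simp_all add: fa_hom_mult)

lemma fa_hom_m1: "fa_hom \<phi> ((-1) ^ n) = (-1) ^ n"
  by (simp add: fa_hom_power fa_hom_uminus)

lemma fa_hom_gen: "fa_hom \<phi> (fa_gen g) = \<phi> g"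
  by (simp add: fa_gen_eq fa_hom_single)

lemma fa_hom_prod_list: "fa_hom \<phi> (prod_list xs) = prod_list (map (fa_hom \<phi>) xs)"
  by (induct xs) (simp_all add: fa_hom_mult)


lemma m1pow_central: "x * (-1) ^ n = ((-1) ^ n :: 'a :: ring_1) * x"
  by (cases "even n") simp_all

lemma m1_shift: "x * ((-1) ^ k * y) = ((-1) ^ k :: 'a :: ring_1) * (x * y)"
  by (simp add: mult.assoc[symmetric] m1pow_central)

lemma m1pow_parity:
  assumes "even (a + e)" "even (b + f)"
  shows "((-1) ^ (a * b) :: 'a :: ring_1) = (-1) ^ (e * f)"
  using assms by (simp add: minus_one_power_iff)

lemma ig_mult: "x \<in> ideal_gen R \<Longrightarrow> a * x * b \<in> ideal_gen R"
  using ideal_gen.mult[of x R a b] by (simp add: fa_mult_eq)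
lemma ig_lmult: "x \<in> ideal_gen R \<Longrightarrow> a * x \<in> ideal_gen R"
  using ig_mult[of x R a 1] by simp
lemma ig_rmult: "x \<in> ideal_gen R \<Longrightarrow> x * b \<in> ideal_gen R"
  using ig_mult[of x R 1 b] by simp
lemma ig_uminus: "x \<in> ideal_gen R \<Longrightarrow> - x \<in> ideal_gen R"
  using ig_lmult[of x R "-1"] by simp
lemma ig_diff: "x \<in> ideal_gen R \<Longrightarrow> y \<in> ideal_gen R \<Longrightarrow> x - y \<in> ideal_gen R"
  using ideal_gen.add[of x R "-y"] ig_uminus[of y R] by simp
lemma ig_sum: "(\<And>a. a \<in> A \<Longrightarrow> f a \<in> ideal_gen R) \<Longrightarrow> sum f A \<in> ideal_gen R"
  by (induct A rule: infinite_finite_induct) (auto intro: ideal_gen.zero ideal_gen.add)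

definition cg :: "'g fa set \<Rightarrow> 'g fa \<Rightarrow> 'g fa \<Rightarrow> bool" where
  "cg R x y \<longleftrightarrow> x - y \<in> ideal_gen R"

lemma cg_refl[simp]: "cg R x x" by (simp add: cg_def ideal_gen.zero)
lemma cg_eq: "x = y \<Longrightarrow> cg R x y" by simp
lemma cg_sym: "cg R x y \<Longrightarrow> cg R y x"
  unfolding cg_def using ig_uminus[of "x - y" R] by simp
lemma cg_trans[trans]: "cg R x y \<Longrightarrow> cg R y z \<Longrightarrow> cg R x z"
  unfolding cg_def using ideal_gen.add[of "x - y" R "y - z"] by simp
lemma cg_add: "cg R a b \<Longrightarrow> cg R c d \<Longrightarrow> cg R (a + c) (b + d)"
  unfolding cg_def using ideal_gen.add[of "a - b" R "c - d"] by (simp add: algebra_simps)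
lemma cg_mult: "cg R a b \<Longrightarrow> cg R (x * a * y) (x * b * y)"
  unfolding cg_def using ig_mult[of "a - b" R x y] by (simp add: algebra_simps)
lemma cg_lmult: "cg R a b \<Longrightarrow> cg R (x * a) (x * b)"
  using cg_mult[of R a b x 1] by simp
lemma cg_rmult: "cg R a b \<Longrightarrow> cg R (a * y) (b * y)"
  using cg_mult[of R a b 1 y] by simp
lemma cg_mult2: "cg R a b \<Longrightarrow> cg R c d \<Longrightarrow> cg R (a * c) (b * d)"
  using cg_rmult[of R a b c] cg_lmult[of R c d b] cg_trans by blast
lemma cg_sum: "(\<And>i. i \<in> A \<Longrightarrow> cg R (f i) (g i)) \<Longrightarrow> cg R (sum f A) (sum g A)"
  unfolding cg_def using ig_sum[of A "\<lambda>i. f i - g i" R] by (simp add: sum_subtractf)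

definition wpar :: "(nat \<Rightarrow> int) \<Rightarrow> ygen list \<Rightarrow> nat" where
  "wpar s w = sum_list (map (gpar s) w)"

lemma wpar_Nil[simp]: "wpar s [] = 0" by (simp add: wpar_def)
lemma wpar_Cons[simp]: "wpar s (g # w) = gpar s g + wpar s w" by (simp add: wpar_def)
lemma wpar_append[simp]: "wpar s (v @ w) = wpar s v + wpar s w" by (simp add: wpar_def)

definition homog :: "(nat \<Rightarrow> int) \<Rightarrow> nat \<Rightarrow> ygen fa \<Rightarrow> bool" where
  "homog s e x \<longleftrightarrow> (\<forall>w\<in>Poly_Mapping.keys x. even (wpar s w + e))"

lemma homog_0[simp]: "homog s e 0" by (simp add: homog_def)
lemma homog_add: "homog s e x \<Longrightarrow> homog s e y \<Longrightarrow> homog s e (x + y)"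
  unfolding homog_def using keys_add[of x y] by blast
lemma homog_uminus: "homog s e x \<Longrightarrow> homog s e (- x)"
  unfolding homog_def by (simp add: keys_def)
lemma homog_diff: "homog s e x \<Longrightarrow> homog s e y \<Longrightarrow> homog s e (x - y)"
  using homog_add[of s e x "-y"] homog_uminus[of s e y] by simp
lemma homog_sum: "(\<And>a. a \<in> A \<Longrightarrow> homog s e (f a)) \<Longrightarrow> homog s e (sum f A)"
  by (induct A rule: infinite_finite_induct) (auto intro: homog_add)
lemma homog_mult: "homog s e x \<Longrightarrow> homog s f y \<Longrightarrow> homog s (e + f) (x * y)"
  unfolding homog_def
proof
  fix w assume hx: "\<forall>w\<in>Poly_Mapping.keys x. even (wpar s w + e)"
    and hy: "\<forall>w\<in>Poly_Mapping.keys y. even (wpar s w + f)" and w: "w \<in> Poly_Mapping.keys (x * y)"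
  then obtain a b where "w = a + b" "a \<in> Poly_Mapping.keys x" "b \<in> Poly_Mapping.keys y"
    using keys_mult[of x y] by blast
  then show "even (wpar s w + (e + f))" using hx hy by (auto simp: plus_list_def)
qed
lemma homog_sc: "even e \<Longrightarrow> homog s e (sc c)"
  by (simp add: homog_def sc_def)
lemma homog_1: "even e \<Longrightarrow> homog s e 1"
  using homog_sc[of e s 1] by simp
lemma homog_m1pow: "homog s 0 ((-1) ^ n)"
  using homog_sc[of 0 s "(-1)^n"] by (simp add: sc_power sc_uminus)
lemma homog_of_int: "homog s 0 (of_int k)"
  using homog_sc[of 0 s "of_int k"] by (simp add: sc_of_int)
lemma homog_cong: "homog s e x \<Longrightarrow> even (e + e') \<Longrightarrow> homog s e' x"
  unfolding homog_def by (metis add.assoc even_add)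
lemma homog_scal: "homog s 0 c \<Longrightarrow> homog s e x \<Longrightarrow> homog s e (c * x)"
  using homog_mult[of s 0 c e x] by simp
lemma homog_gen: "homog s (gpar s g) (fa_gen g)"
  by (simp add: homog_def fa_gen_eq)

section \<open>Super commutation in the tensor product\<close>

abbreviation "gL g \<equiv> (fa_gen (Inl g) :: (ygen + ygen) fa)"
abbreviation "gR g \<equiv> (fa_gen (Inr g) :: (ygen + ygen) fa)"

lemma comm_gen:
  "cg (tens_rels \<kappa> s) (gL g * gR h) ((-1) ^ (gpar s g * gpar s h) * (gR h * gL g))"
proof -
  have "fa_gen (Inl g) \<cdot> fa_gen (Inr h)
          - fa_const (sgn (gpar s g * gpar s h)) \<cdot> (fa_gen (Inr h) \<cdot> fa_gen (Inl g)) \<in> tens_rels \<kappa> s"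
    unfolding tens_rels_def by blast
  then show ?thesis unfolding cg_def
    by (auto intro: ideal_gen.gen simp: fa_mult_eq fa_const_eq sc_sgn)
qed

lemma comm_gen_word:
  "cg (tens_rels \<kappa> s) (gL g * prod_list (map gR w))
      ((-1) ^ (gpar s g * wpar s w) * (prod_list (map gR w) * gL g))"
proof (induct w)
  case Nil then show ?case by simp
next
  case (Cons h w)
  let ?R = "tens_rels \<kappa> s" and ?P = "prod_list (map gR w)"
  have "gL g * prod_list (map gR (h # w)) = (gL g * gR h) * ?P" by (simp add: mult.assoc)
  also have "cg ?R \<dots> (((-1) ^ (gpar s g * gpar s h) * (gR h * gL g)) * ?P)"
    by (rule cg_rmult[OF comm_gen])
  also have "\<dots> = (-1) ^ (gpar s g * gpar s h) * gR h * (gL g * ?P)" by (simp add: mult.assoc)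
  also have "cg ?R \<dots> ((-1) ^ (gpar s g * gpar s h) * gR h * ((-1) ^ (gpar s g * wpar s w) * (?P * gL g)))"
    by (rule cg_lmult[OF Cons])
  also have "\<dots> = (-1) ^ (gpar s g * wpar s (h # w)) * (prod_list (map gR (h # w)) * gL g)"
  proof -
    have c: "gR h * ((-1) ^ (gpar s g * wpar s w) * (?P * gL g))
           = (-1) ^ (gpar s g * wpar s w) * (gR h * (?P * gL g))"
      by (simp only: mult.assoc[symmetric] m1pow_central[of "gR h"])
    show ?thesis by (simp add: mult.assoc c distrib_left power_add)
  qed
  finally show ?case .
qed


lemma m1pow_mult: "(-1) ^ a * ((-1) ^ b * x) = ((-1) ^ (a + b) :: 'a :: ring_1) * x"
  by (simp add: power_add mult.assoc)

lemma comm_word_word: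
  "cg (tens_rels \<kappa> s) (prod_list (map gL v) * prod_list (map gR w))
      ((-1) ^ (wpar s v * wpar s w) * (prod_list (map gR w) * prod_list (map gL v)))"
proof (induct v)
  case Nil then show ?case by simp
next
  case (Cons g v)
  let ?R = "tens_rels \<kappa> s" and ?P = "prod_list (map gL v)" and ?Q = "prod_list (map gR w)"
  have "prod_list (map gL (g # v)) * ?Q = gL g * (?P * ?Q)" by (simp add: mult.assoc)
  also have "cg ?R \<dots> (gL g * ((-1) ^ (wpar s v * wpar s w) * (?Q * ?P)))"
    by (rule cg_lmult[OF Cons])
  also have "\<dots> = (-1) ^ (wpar s v * wpar s w) * (gL g * ?Q) * ?P"
    by (simp only: mult.assoc[symmetric] m1pow_central[of "gL g"])
  also have "cg ?R \<dots> ((-1) ^ (wpar s v * wpar s w) * ((-1) ^ (gpar s g * wpar s w) * (?Q * gL g)) * ?P)"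
    by (rule cg_mult[OF comm_gen_word])
  also have "\<dots> = (-1) ^ (wpar s v * wpar s w + gpar s g * wpar s w) * (?Q * gL g * ?P)"
    by (simp add: m1pow_mult mult.assoc)
  also have "\<dots> = (-1) ^ (wpar s (g # v) * wpar s w) * (?Q * prod_list (map gL (g # v)))"
    by (simp add: mult.assoc distrib_right add.commute)
  finally show ?case .
qed

lemma comm_mono:
  assumes "even (wpar s v + e)" "even (wpar s w + f)"
  shows "cg (tens_rels \<kappa> s) ((sc a * prod_list (map gL v)) * (sc b * prod_list (map gR w)))
           ((-1) ^ (e * f) * ((sc b * prod_list (map gR w)) * (sc a * prod_list (map gL v))))"
proof -
  let ?R = "tens_rels \<kappa> s" and ?P = "prod_list (map gL v)" and ?Q = "prod_list (map gR w)"
  have "(sc a * ?P) * (sc b * ?Q) = sc (a * b) * (?P * ?Q)" by (simp add: sc_swap)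
  also have "cg ?R \<dots> (sc (a * b) * ((-1) ^ (wpar s v * wpar s w) * (?Q * ?P)))"
    by (rule cg_lmult[OF comm_word_word])
  also have "\<dots> = (-1) ^ (wpar s v * wpar s w) * (sc (b * a) * (?Q * ?P))"
    by (simp only: mult.assoc[symmetric] m1pow_central[of "sc (a * b)"]) (simp only: mult.commute[of a b])
  also have "\<dots> = (-1) ^ (e * f) * ((sc b * ?Q) * (sc a * ?P))"
    by (simp add: sc_swap m1pow_parity[OF assms])
  finally show ?thesis .
qed

lemma iota1_eq: "iota1 x = (\<Sum>v\<in>Poly_Mapping.keys x. sc (Poly_Mapping.lookup x v) * prod_list (map gL v))"
  by (simp add: iota1_def fa_hom_eq)
lemma iota2_eq: "iota2 x = (\<Sum>v\<in>Poly_Mapping.keys x. sc (Poly_Mapping.lookup x v) * prod_list (map gR v))"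
  by (simp add: iota2_def fa_hom_eq)

lemma comm_homog:
  assumes "homog s e x" "homog s f y"
  shows "cg (tens_rels \<kappa> s) (iota1 x * iota2 y) ((-1) ^ (e * f) * (iota2 y * iota1 x))"
proof -
  let ?R = "tens_rels \<kappa> s"
  have "iota1 x * iota2 y = (\<Sum>v\<in>Poly_Mapping.keys x. \<Sum>w\<in>Poly_Mapping.keys y.
      (sc (Poly_Mapping.lookup x v) * prod_list (map gL v)) * (sc (Poly_Mapping.lookup y w) * prod_list (map gR w)))"
    by (simp add: iota1_eq iota2_eq sum_distrib_left sum_distrib_right sum.swap[of _ "Poly_Mapping.keys y"])
  also have "cg ?R \<dots> (\<Sum>v\<in>Poly_Mapping.keys x. \<Sum>w\<in>Poly_Mapping.keys y.
      (-1) ^ (e * f) * ((sc (Poly_Mapping.lookup y w) * prod_list (map gR w)) * (sc (Poly_Mapping.lookup x v) * prod_list (map gL v))))"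
    by (intro cg_sum comm_mono) (use assms in \<open>auto simp: homog_def\<close>)
  also have "\<dots> = (-1) ^ (e * f) * (iota2 y * iota1 x)"
    by (simp add: iota1_eq iota2_eq sum_distrib_left sum_distrib_right sum.swap[of _ "Poly_Mapping.keys y"])
  finally show ?thesis .
qed

lemma comm_homog':
  assumes "homog s e x" "homog s f y"
  shows "cg (tens_rels \<kappa> s) (iota2 y * iota1 x) ((-1) ^ (e * f) * (iota1 x * iota2 y))"
proof -
  have "cg (tens_rels \<kappa> s) ((-1) ^ (e * f) * (iota1 x * iota2 y)) ((-1) ^ (e * f) * ((-1) ^ (e * f) * (iota2 y * iota1 x)))"
    by (rule cg_lmult[OF comm_homog[OF assms]])
  also have "(-1) ^ (e * f) * ((-1) ^ (e * f) * (iota2 y * iota1 x)) = iota2 y * iota1 x"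
    by (simp add: mult.assoc[symmetric] power_add[symmetric])
  finally show ?thesis by (rule cg_sym)
qed


section \<open>Formal power series over the free algebras\<close>

unbundle fps_syntax

definition fmap :: "('g \<Rightarrow> 'h fa) \<Rightarrow> 'g fa fps \<Rightarrow> 'h fa fps" where
  "fmap \<phi> F = Abs_fps (\<lambda>n. fa_hom \<phi> (F $ n))"

lemma fmap_nth[simp]: "fmap \<phi> F $ n = fa_hom \<phi> (F $ n)" by (simp add: fmap_def)

lemma fmap_add: "fmap \<phi> (F + G) = fmap \<phi> F + fmap \<phi> G"
  by (simp add: fps_eq_iff fa_hom_add)
lemma fmap_0[simp]: "fmap \<phi> 0 = 0" by (simp add: fps_eq_iff)
lemma fmap_1[simp]: "fmap \<phi> 1 = 1" by (simp add: fps_eq_iff)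
lemma fmap_sum: "fmap \<phi> (sum f A) = (\<Sum>a\<in>A. fmap \<phi> (f a))"
  by (simp add: fps_eq_iff fps_sum_nth fa_hom_sum)
lemma fmap_mult: "fmap \<phi> (F * G) = fmap \<phi> F * fmap \<phi> G"
  by (simp add: fps_eq_iff fps_mult_nth fa_hom_sum fa_hom_mult)
lemma fmap_const: "fmap \<phi> (fps_const c) = fps_const (fa_hom \<phi> c)"
  by (simp add: fps_eq_iff)

definition negX :: "'a :: ring_1 fps \<Rightarrow> 'a fps" where
  "negX F = Abs_fps (\<lambda>n. (-1) ^ n * F $ n)"

lemma negX_nth[simp]: "negX F $ n = (-1) ^ n * F $ n" by (simp add: negX_def)
lemma negX_add: "negX (F + G) = negX F + negX G" by (simp add: fps_eq_iff distrib_left)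
lemma negX_0[simp]: "negX 0 = 0" by (simp add: fps_eq_iff)
lemma negX_sum: "negX (sum f A) = (\<Sum>a\<in>A. negX (f a))"
  by (simp add: fps_eq_iff fps_sum_nth sum_distrib_left)
lemma negX_mult: "negX (F * G) = negX F * negX G"
proof (rule fps_ext)
  fix n
  have "\<And>i. i \<in> {0..n} \<Longrightarrow> (-1) ^ n * (F $ i * G $ (n - i)) = (-1) ^ i * F $ i * ((-1) ^ (n - i) * G $ (n - i))"
  proof -
    fix i assume "i \<in> {0..n}"
    then have n: "n = i + (n - i)" by auto
    have "(-1) ^ i * F $ i * ((-1) ^ (n - i) * G $ (n - i)) = (-1) ^ i * ((-1) ^ (n - i) * F $ i) * G $ (n - i)"
      by (simp only: mult.assoc m1_shift[of "F $ i"])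
    also have "\<dots> = (-1) ^ n * (F $ i * G $ (n - i))"
      by (subst n) (simp only: power_add mult.assoc)
    finally show "(-1) ^ n * (F $ i * G $ (n - i)) = (-1) ^ i * F $ i * ((-1) ^ (n - i) * G $ (n - i))" by simp
  qed
  then show "negX (F * G) $ n = (negX F * negX G) $ n"
    by (simp add: fps_mult_nth sum_distrib_left)
qed
lemma fmap_negX: "fmap \<phi> (negX F) = negX (fmap \<phi> F)"
  by (simp add: fps_eq_iff fa_hom_mult fa_hom_m1)

definition fcg :: "'g fa set \<Rightarrow> 'g fa fps \<Rightarrow> 'g fa fps \<Rightarrow> bool" where
  "fcg R F G \<longleftrightarrow> (\<forall>n. cg R (F $ n) (G $ n))"

lemma fcg_refl[simp]: "fcg R F F" by (simp add: fcg_def)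
lemma fcg_trans[trans]: "fcg R F G \<Longrightarrow> fcg R G H \<Longrightarrow> fcg R F H"
  unfolding fcg_def using cg_trans by blast
lemma fcg_add: "fcg R F G \<Longrightarrow> fcg R F' G' \<Longrightarrow> fcg R (F + F') (G + G')"
  unfolding fcg_def by (simp add: cg_add)
lemma fcg_sum: "(\<And>i. i \<in> A \<Longrightarrow> fcg R (f i) (g i)) \<Longrightarrow> fcg R (sum f A) (sum g A)"
  unfolding fcg_def by (simp add: fps_sum_nth cg_sum)
lemma fcg_lmult: "fcg R F G \<Longrightarrow> fcg R (P * F) (P * G)"
  unfolding fcg_def by (simp add: fps_mult_nth cg_sum cg_lmult)
lemma fcg_rmult: "fcg R F G \<Longrightarrow> fcg R (F * Q) (G * Q)"
  unfolding fcg_def by (simp add: fps_mult_nth cg_sum cg_rmult)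
lemma fcg_mult: "fcg R F G \<Longrightarrow> fcg R (P * F * Q) (P * G * Q)"
  by (intro fcg_rmult fcg_lmult)

lemma fcg_comm:
  assumes "\<And>n. homog s e (X $ n)" "\<And>n. homog s f (Y $ n)"
  shows "fcg (tens_rels \<kappa> s) (fmap (\<lambda>g. fa_gen (Inr g)) Y * fmap (\<lambda>g. fa_gen (Inl g)) X)
           (fps_const ((-1) ^ (e * f)) * (fmap (\<lambda>g. fa_gen (Inl g)) X * fmap (\<lambda>g. fa_gen (Inr g)) Y))"
  unfolding fcg_def
proof
  fix n
  let ?R = "tens_rels \<kappa> s"
  have "(fmap (\<lambda>g. fa_gen (Inr g)) Y * fmap (\<lambda>g. fa_gen (Inl g)) X) $ n
      = (\<Sum>i=0..n. iota2 (Y $ i) * iota1 (X $ (n - i)))"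
    by (simp add: fps_mult_nth iota1_def iota2_def)
  also have "cg ?R \<dots> (\<Sum>i=0..n. (-1) ^ (e * f) * (iota1 (X $ (n - i)) * iota2 (Y $ i)))"
    by (intro cg_sum comm_homog' assms)
  also have "\<dots> = (\<Sum>i=0..n. (-1) ^ (e * f) * (iota1 (X $ i) * iota2 (Y $ (n - i))))"
    by (subst sum.atLeastAtMost_rev) (auto intro!: sum.cong)
  also have "\<dots> = (fps_const ((-1) ^ (e * f)) * (fmap (\<lambda>g. fa_gen (Inl g)) X * fmap (\<lambda>g. fa_gen (Inr g)) Y)) $ n"
    by (simp only: fps_mult_left_const_nth) (simp add: fps_mult_nth iota1_def iota2_def sum_distrib_left)
  finally show "cg ?R ((fmap (\<lambda>g. fa_gen (Inr g)) Y * fmap (\<lambda>g. fa_gen (Inl g)) X) $ n)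
     ((fps_const ((-1) ^ (e * f)) * (fmap (\<lambda>g. fa_gen (Inl g)) X * fmap (\<lambda>g. fa_gen (Inr g)) Y)) $ n)" .
qed


lemma fps_const_m1pow: "fps_const ((-1) ^ N :: 'a :: ring_1) = (-1) ^ N"
  by (simp add: minus_one_power_iff flip: fps_const_neg)

lemma sum_rev3: "(\<Sum>a\<in>A. \<Sum>b\<in>B. \<Sum>c\<in>C. f a b c) = (\<Sum>c\<in>C. \<Sum>b\<in>B. \<Sum>a\<in>A. f a b c)"
proof -
  have "(\<Sum>a\<in>A. \<Sum>b\<in>B. \<Sum>c\<in>C. f a b c) = (\<Sum>a\<in>A. \<Sum>c\<in>C. \<Sum>b\<in>B. f a b c)"
    by (intro sum.cong refl) (rule sum.swap)
  also have "\<dots> = (\<Sum>c\<in>C. \<Sum>a\<in>A. \<Sum>b\<in>B. f a b c)" by (rule sum.swap)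
  also have "\<dots> = (\<Sum>c\<in>C. \<Sum>b\<in>B. \<Sum>a\<in>A. f a b c)"
    by (intro sum.cong refl) (rule sum.swap)
  finally show ?thesis .
qed

declare kdelta_eq[simp]

lemma fa_hom_if10[simp]: "fa_hom \<phi> (if c then 1 else 0) = (if c then 1 else 0)"
  by simp
lemma fmap_if10: "fmap \<phi> (if c then 1 else 0) = (if c then 1 else 0)"
  by simp

section \<open>The matrices T(u), T'(u)\<close>

abbreviation "gLf \<equiv> (\<lambda>g. fa_gen (Inl g) :: (ygen + ygen) fa)"
abbreviation "gRf \<equiv> (\<lambda>g. fa_gen (Inr g) :: (ygen + ygen) fa)"

definition Tm :: "nat \<Rightarrow> nat \<Rightarrow> ygen fa fps" where "Tm i j = Abs_fps (\<lambda>r. tc r i j)"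
definition Tp :: "nat \<Rightarrow> nat \<Rightarrow> nat \<Rightarrow> ygen fa fps" where "Tp \<kappa> i j = Abs_fps (\<lambda>r. tpc \<kappa> r i j)"

lemma Tm_nth[simp]: "Tm i j $ r = tc r i j" by (simp add: Tm_def)
lemma Tp_nth[simp]: "Tp \<kappa> i j $ r = tpc \<kappa> r i j" by (simp add: Tp_def)

lemma T_rinv:
  assumes "i < \<kappa>"
  shows "(\<Sum>k<\<kappa>. Tm i k * Tp \<kappa> k j) = (if i = j then 1 else 0)"
proof (rule fps_ext)
  fix n
  show "(\<Sum>k<\<kappa>. Tm i k * Tp \<kappa> k j) $ n = (if i = j then 1 else 0 :: ygen fa fps) $ n"
  proof (cases n)
    case 0
    then show ?thesis using assms by (simp add: fps_sum_nth if_distrib[of "\<lambda>x. x * _"] cong: if_cong)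
  next
    case (Suc r)
    have "(\<Sum>k<\<kappa>. Tm i k * Tp \<kappa> k j) $ n
        = (\<Sum>k<\<kappa>. \<Sum>p=0..Suc r. tc p i k * tpc \<kappa> (Suc r - p) k j)"
      by (simp only: Suc fps_sum_nth fps_mult_nth Tm_nth Tp_nth)
    also have "\<dots> = (\<Sum>k<\<kappa>. tc 0 i k * tpc \<kappa> (Suc r) k j)
        + (\<Sum>k<\<kappa>. \<Sum>p\<in>{1..Suc r}. tc p i k * tpc \<kappa> (Suc r - p) k j)"
      by (simp only: sum.atLeast_Suc_atMost[OF le0] diff_zero One_nat_def sum.distrib)
    also have "(\<Sum>k<\<kappa>. tc 0 i k * tpc \<kappa> (Suc r) k j) = tpc \<kappa> (Suc r) i j"
      using assms by (simp del: tpc.simps add: if_distrib[of "\<lambda>x. x * _"] cong: if_cong)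
    also have "(\<Sum>k<\<kappa>. \<Sum>p\<in>{1..Suc r}. tc p i k * tpc \<kappa> (Suc r - p) k j)
        = (\<Sum>p\<in>{1..Suc r}. \<Sum>k<\<kappa>. tc p i k * tpc \<kappa> (Suc r - p) k j)"
      by (rule sum.swap)
    also have "tpc \<kappa> (Suc r) i j = - (\<Sum>p\<in>{1..Suc r}. \<Sum>k<\<kappa>. tc p i k * tpc \<kappa> (Suc r - p) k j)"
      by (simp only: tpc.simps fa_mult_eq)
    finally show ?thesis by (simp add: Suc)
  qed
qed

lemma Delta_T:
  assumes "i < \<kappa>"
  shows "fmap (delta_gen \<kappa>) (Tm i j) = (\<Sum>k<\<kappa>. fmap gLf (Tm i k) * fmap gRf (Tm k j))"
proof (rule fps_ext)
  fix n
  show "fmap (delta_gen \<kappa>) (Tm i j) $ n = (\<Sum>k<\<kappa>. fmap gLf (Tm i k) * fmap gRf (Tm k j)) $ n"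
  proof (cases n)
    case 0
    then show ?thesis using assms
      by (simp add: fps_sum_nth if_distrib[of "\<lambda>x. x * _"] cong: if_cong)
  next
    case (Suc r)
    then show ?thesis
      by (simp add: fps_sum_nth fps_mult_nth fa_hom_gen delta_gen_def fa_mult_eq iota1_def iota2_def
            atLeast0AtMost sum.swap[of _ "{..<\<kappa>}"])
  qed
qed

lemma Delta_TT:
  assumes "i < \<kappa>"
  shows "(\<Sum>k<\<kappa>. fmap (delta_gen \<kappa>) (Tm i k) * fmap (delta_gen \<kappa>) (Tp \<kappa> k j)) = (if i = j then 1 else 0)"
proof -
  have "(\<Sum>k<\<kappa>. fmap (delta_gen \<kappa>) (Tm i k) * fmap (delta_gen \<kappa>) (Tp \<kappa> k j))
      = fmap (delta_gen \<kappa>) (\<Sum>k<\<kappa>. Tm i k * Tp \<kappa> k j)"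
    by (simp add: fmap_sum fmap_mult)
  then show ?thesis using T_rinv[OF assms] by simp
qed

definition Dm :: "nat \<Rightarrow> nat \<Rightarrow> nat \<Rightarrow> (ygen + ygen) fa fps" where
  "Dm \<kappa> i j = (\<Sum>l<\<kappa>. fmap gRf (Tp \<kappa> i l) * fmap gLf (Tp \<kappa> l j))"

lemma fmap_T_rinv:
  assumes "i < \<kappa>"
  shows "(\<Sum>k<\<kappa>. fmap \<phi> (Tm i k) * fmap \<phi> (Tp \<kappa> k j)) = (if i = j then 1 else 0)"
proof -
  have "(\<Sum>k<\<kappa>. fmap \<phi> (Tm i k) * fmap \<phi> (Tp \<kappa> k j)) = fmap \<phi> (\<Sum>k<\<kappa>. Tm i k * Tp \<kappa> k j)"
    by (simp add: fmap_sum fmap_mult)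
  then show ?thesis using T_rinv[OF assms] by simp
qed

lemma Delta_T_D:
  assumes "i < \<kappa>"
  shows "(\<Sum>k<\<kappa>. fmap (delta_gen \<kappa>) (Tm i k) * Dm \<kappa> k j) = (if i = j then 1 else 0)"
proof -
  let ?A1 = "\<lambda>i k. fmap gLf (Tm i k)" and ?A2 = "\<lambda>i k. fmap gRf (Tm i k)"
  let ?B1 = "\<lambda>i k. fmap gLf (Tp \<kappa> i k)" and ?B2 = "\<lambda>i k. fmap gRf (Tp \<kappa> i k)"
  have "(\<Sum>k<\<kappa>. fmap (delta_gen \<kappa>) (Tm i k) * Dm \<kappa> k j)
      = (\<Sum>k<\<kappa>. (\<Sum>k1<\<kappa>. ?A1 i k1 * ?A2 k1 k) * (\<Sum>l<\<kappa>. ?B2 k l * ?B1 l j))"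
    by (simp add: Delta_T[OF assms] Dm_def)
  also have "\<dots> = (\<Sum>k<\<kappa>. \<Sum>l<\<kappa>. \<Sum>k1<\<kappa>. ?A1 i k1 * (?A2 k1 k * (?B2 k l * ?B1 l j)))"
    by (simp add: sum_distrib_left sum_distrib_right mult.assoc)
  also have "\<dots> = (\<Sum>k1<\<kappa>. \<Sum>l<\<kappa>. \<Sum>k<\<kappa>. ?A1 i k1 * (?A2 k1 k * (?B2 k l * ?B1 l j)))"
    by (rule sum_rev3)
  also have "\<dots> = (\<Sum>k1<\<kappa>. \<Sum>l<\<kappa>. ?A1 i k1 * (\<Sum>k<\<kappa>. ?A2 k1 k * ?B2 k l) * ?B1 l j)"
    by (simp add: sum_distrib_left sum_distrib_right mult.assoc)
  also have "\<dots> = (\<Sum>k1<\<kappa>. \<Sum>l<\<kappa>. ?A1 i k1 * (if k1 = l then 1 else 0) * ?B1 l j)"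
    by (intro sum.cong refl) (simp add: fmap_T_rinv)
  also have "\<dots> = (\<Sum>k1<\<kappa>. ?A1 i k1 * ?B1 k1 j)"
    by (simp add: if_distrib[of "\<lambda>x. _ * x"] if_distrib[of "\<lambda>x. x * _"] cong: if_cong)
  also have "\<dots> = (if i = j then 1 else 0)"
    by (rule fmap_T_rinv[OF assms])
  finally show ?thesis .
qed

lemma rinv_unique:
  fixes M :: "nat \<Rightarrow> nat \<Rightarrow> 'a :: ring_1 fps" and N1 N2 :: "nat \<Rightarrow> 'a fps"
  assumes M0: "\<And>i k. i < \<kappa> \<Longrightarrow> k < \<kappa> \<Longrightarrow> M i k $ 0 = (if i = k then 1 else 0)"
    and eq: "\<And>i. i < \<kappa> \<Longrightarrow> (\<Sum>k<\<kappa>. M i k * N1 k) = (\<Sum>k<\<kappa>. M i k * N2 k)"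
  shows "\<And>i. i < \<kappa> \<Longrightarrow> N1 i = N2 i"
proof -
  have "\<forall>i<\<kappa>. N1 i $ n = N2 i $ n" for n
  proof (induct n rule: less_induct)
    case (less n)
    show ?case
    proof (intro allI impI)
      fix i assume i: "i < \<kappa>"
      have split: "(\<Sum>k<\<kappa>. M i k * N k) $ n = N i $ n + (\<Sum>k<\<kappa>. \<Sum>p\<in>{1..n}. M i k $ p * N k $ (n - p))"
        for N :: "nat \<Rightarrow> 'a fps"
      proof -
        have "(\<Sum>k<\<kappa>. M i k * N k) $ n = (\<Sum>k<\<kappa>. M i k $ 0 * N k $ n + (\<Sum>p\<in>{1..n}. M i k $ p * N k $ (n - p)))"
          by (simp add: fps_sum_nth fps_mult_nth sum.atLeast_Suc_atMost)
        also have "\<dots> = N i $ n + (\<Sum>k<\<kappa>. \<Sum>p\<in>{1..n}. M i k $ p * N k $ (n - p))"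
          using i by (simp add: sum.distrib M0 if_distrib[of "\<lambda>x. x * _"] cong: if_cong)
        finally show ?thesis .
      qed
      have "(\<Sum>k<\<kappa>. \<Sum>p\<in>{1..n}. M i k $ p * N1 k $ (n - p)) = (\<Sum>k<\<kappa>. \<Sum>p\<in>{1..n}. M i k $ p * N2 k $ (n - p))"
        using less by (intro sum.cong refl) auto
      then show "N1 i $ n = N2 i $ n"
        using split[of N1] split[of N2] eq[OF i] by simp
    qed
  qed
  then show "\<And>i. i < \<kappa> \<Longrightarrow> N1 i = N2 i" by (simp add: fps_eq_iff)
qed

lemma Delta_Tp:
  assumes "i < \<kappa>"
  shows "fmap (delta_gen \<kappa>) (Tp \<kappa> i j) = Dm \<kappa> i j"
  using rinv_unique[of \<kappa> "\<lambda>i k. fmap (delta_gen \<kappa>) (Tm i k)" "\<lambda>k. fmap (delta_gen \<kappa>) (Tp \<kappa> k j)" "\<lambda>k. Dm \<kappa> k j"]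
    Delta_TT Delta_T_D assms
  by simp


lemma homog_tc: "homog s (par s i + par s j) (tc r i j)"
proof (cases r)
  case 0 then show ?thesis by (simp add: homog_1)
next
  case (Suc r') then show ?thesis using homog_gen[of s "(i, j, Suc r')"] by (simp add: gpar_def)
qed

lemma homog_tpc: "homog s (par s i + par s j) (tpc \<kappa> r i j)"
proof (induct r arbitrary: i j rule: less_induct)
  case (less r)
  show ?case
  proof (cases r)
    case 0 then show ?thesis by (simp add: homog_1)
  next
    case (Suc r')
    have "homog s (par s i + par s j) (tc p i k * tpc \<kappa> (Suc r' - p) k j)" if "p \<in> {1..Suc r'}" for p k
    proof (rule homog_cong)
      show "homog s ((par s i + par s k) + (par s k + par s j)) (tc p i k * tpc \<kappa> (Suc r' - p) k j)"
        using homog_tc less[of "Suc r' - p"] that Suc by (intro homog_mult) auto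
      show "even (par s i + par s k + (par s k + par s j) + (par s i + par s j))" by presburger
    qed
    then show ?thesis using Suc
      by (simp only: tpc.simps fa_mult_eq) (intro homog_uminus homog_sum)
  qed
qed

lemma homog_bc: "homog s (par s i + par s j) (bc \<kappa> \<epsilon> r i j)"
proof -
  have h: "homog s (par s i + par s j) (tc p i a * tpc \<kappa> q a j)" for a p q
  proof -
    have "even (par s i + par s a + (par s a + par s j) + (par s i + par s j))" by presburger
    then show ?thesis by (intro homog_cong[OF homog_mult[OF homog_tc homog_tpc]])
  qed
  show ?thesis
    unfolding bc_def fa_mult_eq fa_const_eq sc_sgn sc_of_int
    by (intro homog_sum homog_scal homog_of_int homog_m1pow h)
qed

definition Tn :: "nat \<Rightarrow> nat \<Rightarrow> nat \<Rightarrow> ygen fa fps" where "Tn \<kappa> i j = negX (Tp \<kappa> i j)"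

definition Bs :: "nat \<Rightarrow> (nat \<Rightarrow> int) \<Rightarrow> nat \<Rightarrow> nat \<Rightarrow> ygen fa fps" where
  "Bs \<kappa> \<epsilon> i j = (\<Sum>a<\<kappa>. of_int (\<epsilon> a) * (Tm i a * Tn \<kappa> a j))"

lemma fps_of_int_mult_nth: "(of_int e * F) $ n = of_int e * F $ n"
  by (simp flip: fps_of_int)

lemma fps_m1pow_mult_nth: "(((-1) ^ N :: 'a :: ring_1 fps) * F) $ n = (-1) ^ N * F $ n"
  by (simp flip: fps_const_m1pow)

lemma fmap_of_int: "fmap \<phi> (of_int e) = of_int e"
  by (simp add: fmap_const fa_hom_of_int flip: fps_of_int)

lemma Bs_nth: "Bs \<kappa> \<epsilon> i j $ r = bc \<kappa> \<epsilon> r i j"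
  unfolding Bs_def fps_sum_nth fps_of_int_mult_nth
  by (simp add: bc_def fps_mult_nth Tn_def fa_mult_eq fa_const_eq
      sc_sgn sc_of_int atLeast0AtMost m1_shift)

lemma homog_Tn: "homog s (par s i + par s j) (Tn \<kappa> i j $ n)"
  by (simp add: Tn_def homog_scal homog_m1pow homog_tpc)

lemma homog_Bs: "homog s (par s i + par s j) (Bs \<kappa> \<epsilon> i j $ n)"
  by (simp add: Bs_nth homog_bc)

lemma Delta_Tn:
  assumes "a < \<kappa>"
  shows "fmap (delta_gen \<kappa>) (Tn \<kappa> a j) = (\<Sum>l<\<kappa>. fmap gRf (Tn \<kappa> a l) * fmap gLf (Tn \<kappa> l j))"
  by (simp add: Tn_def fmap_negX Delta_Tp[OF assms] Dm_def negX_sum negX_mult)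

lemma of_int_shift: "x * (of_int e * y) = (of_int e :: 'a :: ring_1) * (x * y)"
proof -
  have "x * (of_int e * y) = (x * of_int e) * y" by (simp only: mult.assoc)
  also have "x * of_int e = of_int e * x" by (rule mult_of_int_commute[symmetric])
  finally show ?thesis by (simp only: mult.assoc)
qed

definition sig :: "(nat \<Rightarrow> int) \<Rightarrow> nat \<Rightarrow> nat \<Rightarrow> nat \<Rightarrow> nat" where
  "sig s j k l = (par s l + par s j) * (par s k + par s l)"

lemma main_fps:
  assumes i: "i < \<kappa>"
  shows "fcg (tens_rels \<kappa> s) (fmap (delta_gen \<kappa>) (Bs \<kappa> \<epsilon> i j))
     (\<Sum>k<\<kappa>. \<Sum>l<\<kappa>. (-1) ^ sig s j k l * (fmap gLf (Tm i k * Tn \<kappa> l j) * fmap gRf (Bs \<kappa> \<epsilon> k l)))"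
proof -
  let ?A1 = "\<lambda>i k. fmap gLf (Tm i k)" and ?A2 = "\<lambda>i k. fmap gRf (Tm i k)"
  let ?B1 = "\<lambda>i k. fmap gLf (Tn \<kappa> i k)" and ?B2 = "\<lambda>i k. fmap gRf (Tn \<kappa> i k)"
  let ?R = "tens_rels \<kappa> s"
  have "fmap (delta_gen \<kappa>) (Bs \<kappa> \<epsilon> i j)
      = (\<Sum>a<\<kappa>. of_int (\<epsilon> a) * ((\<Sum>k<\<kappa>. ?A1 i k * ?A2 k a) * (\<Sum>l<\<kappa>. ?B2 a l * ?B1 l j)))"
    by (simp add: Bs_def fmap_sum fmap_mult fmap_of_int Delta_T[OF i] Delta_Tn)
  also have "\<dots> = (\<Sum>a<\<kappa>. \<Sum>l<\<kappa>. \<Sum>k<\<kappa>. of_int (\<epsilon> a) * (?A1 i k * (?A2 k a * (?B2 a l * ?B1 l j))))"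
    by (simp add: sum_distrib_left sum_distrib_right mult.assoc)
  also have "\<dots> = (\<Sum>k<\<kappa>. \<Sum>l<\<kappa>. \<Sum>a<\<kappa>. of_int (\<epsilon> a) * (?A1 i k * (?A2 k a * (?B2 a l * ?B1 l j))))"
    by (rule sum_rev3)
  also have "\<dots> = (\<Sum>k<\<kappa>. \<Sum>l<\<kappa>. ?A1 i k * (fmap gRf (Bs \<kappa> \<epsilon> k l) * ?B1 l j))"
    by (simp add: Bs_def fmap_sum fmap_mult fmap_of_int sum_distrib_left sum_distrib_right mult.assoc of_int_shift)
  finally have e1: "fmap (delta_gen \<kappa>) (Bs \<kappa> \<epsilon> i j) = (\<Sum>k<\<kappa>. \<Sum>l<\<kappa>. ?A1 i k * (fmap gRf (Bs \<kappa> \<epsilon> k l) * ?B1 l j))" .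
  have e2: "fcg ?R (\<Sum>k<\<kappa>. \<Sum>l<\<kappa>. ?A1 i k * (fmap gRf (Bs \<kappa> \<epsilon> k l) * ?B1 l j))
     (\<Sum>k<\<kappa>. \<Sum>l<\<kappa>. ?A1 i k * (fps_const ((-1) ^ sig s j k l) * (?B1 l j * fmap gRf (Bs \<kappa> \<epsilon> k l))))"
    unfolding sig_def by (intro fcg_sum fcg_lmult fcg_comm homog_Tn homog_Bs)
  have e3: "(\<Sum>k<\<kappa>. \<Sum>l<\<kappa>. ?A1 i k * (fps_const ((-1) ^ sig s j k l) * (?B1 l j * fmap gRf (Bs \<kappa> \<epsilon> k l))))
     = (\<Sum>k<\<kappa>. \<Sum>l<\<kappa>. (-1) ^ sig s j k l * (fmap gLf (Tm i k * Tn \<kappa> l j) * fmap gRf (Bs \<kappa> \<epsilon> k l)))"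
    by (simp add: fps_const_m1pow m1_shift fmap_mult mult.assoc)
  show ?thesis using e1 e2 e3 by simp
qed


section \<open>Part 1: the coproduct formula\<close>

lemma sum_tri:
  fixes g :: "nat \<Rightarrow> nat \<Rightarrow> nat \<Rightarrow> 'a :: comm_monoid_add"
  shows "(\<Sum>n=0..r. \<Sum>p=0..n. g p (n - p) (r - n)) = (\<Sum>p\<le>r. \<Sum>q\<le>r - p. g p q (r - p - q))"
proof -
  have "(\<Sum>p\<le>r. \<Sum>q\<le>r - p. g p q (r - p - q)) = (\<Sum>(p, q)\<in>Sigma {..r} (\<lambda>p. {..r - p}). g p q (r - p - q))"
    by (rule sum.Sigma) auto
  also have "Sigma {..r} (\<lambda>p. {..r - p}) = {(p, q). p + q \<le> r}" by auto
  also have "(\<Sum>(p, q)\<in>{(p, q). p + q \<le> r}. g p q (r - p - q)) = (\<Sum>n\<le>r. \<Sum>p\<le>n. g p (n - p) (r - p - (n - p)))"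
    by (rule sum.triangle_reindex_eq)
  also have "\<dots> = (\<Sum>n=0..r. \<Sum>p=0..n. g p (n - p) (r - n))"
    by (simp add: atLeast0AtMost)
  finally show ?thesis by simp
qed

lemma coef_term:
  "(fmap gLf (Tm i k * Tn \<kappa> l j) * fmap gRf (Bs \<kappa> \<epsilon> k l)) $ r
   = (\<Sum>p\<le>r. \<Sum>q\<le>r - p. (-1) ^ q * (fa_hom gLf (tc p i k * tpc \<kappa> q l j) * fa_hom gRf (bc \<kappa> \<epsilon> (r - p - q) k l)))"
proof -
  have "(fmap gLf (Tm i k * Tn \<kappa> l j) * fmap gRf (Bs \<kappa> \<epsilon> k l)) $ r
     = (\<Sum>n=0..r. \<Sum>p=0..n. (-1) ^ (n - p) * (fa_hom gLf (tc p i k * tpc \<kappa> (n - p) l j) * fa_hom gRf (bc \<kappa> \<epsilon> (r - n) k l)))"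
    by (simp add: fps_mult_nth Bs_nth Tn_def fa_hom_sum fa_hom_mult fa_hom_m1 sum_distrib_right m1_shift mult.assoc)
  also have "\<dots> = (\<Sum>p\<le>r. \<Sum>q\<le>r - p. (-1) ^ q * (fa_hom gLf (tc p i k * tpc \<kappa> q l j) * fa_hom gRf (bc \<kappa> \<epsilon> (r - p - q) k l)))"
    by (rule sum_tri)
  finally show ?thesis .
qed

lemma part1:
  assumes i: "i < \<kappa>"
  shows "Delta \<kappa> (bc \<kappa> \<epsilon> r i j)
            - (\<Sum>a<\<kappa>. \<Sum>c<\<kappa>.
                 fa_const (sgn ((par s c + par s j) * (par s a + par s c))) \<cdot>
                 (\<Sum>p\<le>r. \<Sum>q\<le>r - p.
                    fa_const (sgn q) \<cdot> (iota1 (tc p i a \<cdot> tpc \<kappa> q c j)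
                      \<cdot> iota2 (bc \<kappa> \<epsilon> (r - p - q) a c))))
            \<in> tens_ideal \<kappa> s"
proof -
  have "cg (tens_rels \<kappa> s) (fmap (delta_gen \<kappa>) (Bs \<kappa> \<epsilon> i j) $ r)
     ((\<Sum>k<\<kappa>. \<Sum>l<\<kappa>. (-1) ^ sig s j k l * (fmap gLf (Tm i k * Tn \<kappa> l j) * fmap gRf (Bs \<kappa> \<epsilon> k l))) $ r)"
    using main_fps[OF i, of s \<epsilon> j] by (simp add: fcg_def)
  moreover have "fmap (delta_gen \<kappa>) (Bs \<kappa> \<epsilon> i j) $ r = Delta \<kappa> (bc \<kappa> \<epsilon> r i j)"
    by (simp add: Bs_nth Delta_def)
  moreover have "(\<Sum>k<\<kappa>. \<Sum>l<\<kappa>. (-1) ^ sig s j k l * (fmap gLf (Tm i k * Tn \<kappa> l j) * fmap gRf (Bs \<kappa> \<epsilon> k l))) $ r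
     = (\<Sum>a<\<kappa>. \<Sum>c<\<kappa>.
                 fa_const (sgn ((par s c + par s j) * (par s a + par s c))) \<cdot>
                 (\<Sum>p\<le>r. \<Sum>q\<le>r - p.
                    fa_const (sgn q) \<cdot> (iota1 (tc p i a \<cdot> tpc \<kappa> q c j)
                      \<cdot> iota2 (bc \<kappa> \<epsilon> (r - p - q) a c))))"
    by (simp only: fps_sum_nth fps_m1pow_mult_nth coef_term fa_mult_eq fa_const_eq sc_sgn sig_def
          iota1_def iota2_def)
  ultimately show ?thesis by (simp add: cg_def tens_ideal_def)
qed


section \<open>Part 2: coideal property\<close>

lemma ts_sum: "(\<And>a. a \<in> A \<Longrightarrow> f a \<in> subalg_gen S) \<Longrightarrow> sum f A \<in> subalg_gen S"
proof (induct A rule: infinite_finite_induct)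
  case (infinite A)
  then show ?case using subalg_gen.const[of 0 S] by (simp add: fa_const_eq)
next
  case empty
  then show ?case using subalg_gen.const[of 0 S] by (simp add: fa_const_eq)
next
  case (insert x F)
  then show ?case by (simp add: subalg_gen.add)
qed

lemma ts_if10: "(if c then 1 else 0) \<in> subalg_gen S"
  using subalg_gen.const[of 1 S] subalg_gen.const[of 0 S] by (simp add: fa_const_eq)

lemma bc0_ts: "bc \<kappa> \<epsilon> 0 a c \<in> subalg_gen S"
  unfolding bc_def
  by (intro ts_sum subalg_gen.mult subalg_gen.const) (simp_all add: ts_if10)

lemma bc_ts:
  assumes "a < \<kappa>" "c < \<kappa>"
  shows "bc \<kappa> \<epsilon> w a c \<in> twisted_subalg \<kappa> \<epsilon>"
proof (cases w)
  case 0 then show ?thesis by (simp add: twisted_subalg_def bc0_ts)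
next
  case (Suc w') then show ?thesis
    using assms unfolding twisted_subalg_def by (intro subalg_gen.gen) auto
qed

definition good :: "nat \<Rightarrow> (nat \<Rightarrow> int) \<Rightarrow> (nat \<Rightarrow> int) \<Rightarrow> (ygen fa \<times> ygen fa) list \<Rightarrow> bool" where
  "good \<kappa> \<epsilon> s ps \<longleftrightarrow> (\<forall>(y, z) \<in> set ps. z \<in> twisted_subalg \<kappa> \<epsilon> \<and> (\<exists>e. homog s e y) \<and> (\<exists>f. homog s f z))"

definition rep :: "nat \<Rightarrow> (nat \<Rightarrow> int) \<Rightarrow> (nat \<Rightarrow> int) \<Rightarrow> (ygen + ygen) fa \<Rightarrow> bool" where
  "rep \<kappa> \<epsilon> s x \<longleftrightarrow> (\<exists>ps. good \<kappa> \<epsilon> s ps \<and> cg (tens_rels \<kappa> s) x (\<Sum>(y, z) \<leftarrow> ps. iota1 y * iota2 z))"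

lemma rep_0: "rep \<kappa> \<epsilon> s 0"
  unfolding rep_def by (rule exI[of _ "[]"]) (simp add: good_def)

lemma rep_cg: "cg (tens_rels \<kappa> s) x x' \<Longrightarrow> rep \<kappa> \<epsilon> s x' \<Longrightarrow> rep \<kappa> \<epsilon> s x"
  unfolding rep_def using cg_trans by blast

lemma rep_eq: "x = x' \<Longrightarrow> rep \<kappa> \<epsilon> s x' \<Longrightarrow> rep \<kappa> \<epsilon> s x"
  by simp

lemma rep_add: "rep \<kappa> \<epsilon> s x \<Longrightarrow> rep \<kappa> \<epsilon> s x' \<Longrightarrow> rep \<kappa> \<epsilon> s (x + x')"
proof -
  assume "rep \<kappa> \<epsilon> s x" "rep \<kappa> \<epsilon> s x'"
  then obtain ps ps' where "good \<kappa> \<epsilon> s ps" "cg (tens_rels \<kappa> s) x (\<Sum>(y, z) \<leftarrow> ps. iota1 y * iota2 z)"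
    "good \<kappa> \<epsilon> s ps'" "cg (tens_rels \<kappa> s) x' (\<Sum>(y, z) \<leftarrow> ps'. iota1 y * iota2 z)"
    unfolding rep_def by blast
  then show ?thesis unfolding rep_def
    by (intro exI[of _ "ps @ ps'"]) (auto simp: good_def intro: cg_add)
qed

lemma rep_sum: "(\<And>a. a \<in> A \<Longrightarrow> rep \<kappa> \<epsilon> s (f a)) \<Longrightarrow> rep \<kappa> \<epsilon> s (sum f A)"
  by (induct A rule: infinite_finite_induct) (simp_all add: rep_0 rep_add)

lemma rep_pair:
  "z \<in> twisted_subalg \<kappa> \<epsilon> \<Longrightarrow> homog s e y \<Longrightarrow> homog s f z \<Longrightarrow> rep \<kappa> \<epsilon> s (iota1 y * iota2 z)"
  unfolding rep_def by (intro exI[of _ "[(y, z)]"]) (auto simp: good_def)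

lemma rep_pp:
  assumes "z \<in> twisted_subalg \<kappa> \<epsilon>" "homog s e y" "homog s f z"
    and "z' \<in> twisted_subalg \<kappa> \<epsilon>" "homog s e' y'" "homog s f' z'"
  shows "rep \<kappa> \<epsilon> s ((iota1 y * iota2 z) * (iota1 y' * iota2 z'))"
proof -
  let ?R = "tens_rels \<kappa> s"
  have "(iota1 y * iota2 z) * (iota1 y' * iota2 z') = iota1 y * (iota2 z * iota1 y') * iota2 z'"
    by (simp add: mult.assoc)
  also have "cg ?R \<dots> (iota1 y * ((-1) ^ (e' * f) * (iota1 y' * iota2 z)) * iota2 z')"
    by (rule cg_mult[OF comm_homog'[OF assms(5) assms(3)]])
  also have "\<dots> = iota1 ((-1) ^ (e' * f) * (y * y')) * iota2 (z * z')"
    by (simp add: iota1_def iota2_def fa_hom_mult fa_hom_m1 m1_shift mult.assoc)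
  finally have c: "cg ?R ((iota1 y * iota2 z) * (iota1 y' * iota2 z')) (iota1 ((-1) ^ (e' * f) * (y * y')) * iota2 (z * z'))" .
  have "z * z' \<in> twisted_subalg \<kappa> \<epsilon>"
    using subalg_gen.mult[of z _ z'] assms(1,4) by (simp add: twisted_subalg_def fa_mult_eq)
  moreover have "homog s (e + e') ((-1) ^ (e' * f) * (y * y'))"
    by (intro homog_scal homog_m1pow homog_mult assms)
  moreover have "homog s (f + f') (z * z')" by (intro homog_mult assms)
  ultimately show ?thesis using rep_cg[OF c] rep_pair by blast
qed

lemma rep_lists:
  assumes "good \<kappa> \<epsilon> s ps" "good \<kappa> \<epsilon> s ps'"
  shows "rep \<kappa> \<epsilon> s ((\<Sum>(y, z) \<leftarrow> ps. iota1 y * iota2 z) * (\<Sum>(y, z) \<leftarrow> ps'. iota1 y * iota2 z))"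
  using assms(1)
proof (induct ps)
  case Nil then show ?case by (simp add: rep_0)
next
  case (Cons p ps)
  obtain y z where p: "p = (y, z)" by (cases p)
  from Cons.prems p have g: "good \<kappa> \<epsilon> s ps" and z: "z \<in> twisted_subalg \<kappa> \<epsilon>"
    and hy: "\<exists>e. homog s e y" and hz: "\<exists>f. homog s f z"
    by (auto simp: good_def)
  have "rep \<kappa> \<epsilon> s ((iota1 y * iota2 z) * (\<Sum>(y, z) \<leftarrow> qs. iota1 y * iota2 z))" if "good \<kappa> \<epsilon> s qs" for qs
    using that
  proof (induct qs)
    case Nil then show ?case by (simp add: rep_0)
  next
    case (Cons q qs)
    obtain y' z' where q: "q = (y', z')" by (cases q)
    from Cons.prems q have g': "good \<kappa> \<epsilon> s qs" and z': "z' \<in> twisted_subalg \<kappa> \<epsilon>"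
      and hy': "\<exists>e. homog s e y'" and hz': "\<exists>f. homog s f z'"
      by (auto simp: good_def)
    have "rep \<kappa> \<epsilon> s ((iota1 y * iota2 z) * (iota1 y' * iota2 z'))"
      using hy hz hy' hz' z z' rep_pp by blast
    then show ?case using Cons.hyps[OF g'] q by (simp add: distrib_left rep_add)
  qed
  then show ?case using Cons.hyps[OF g] p assms(2) by (simp add: distrib_right rep_add)
qed

lemma rep_mult: "rep \<kappa> \<epsilon> s x \<Longrightarrow> rep \<kappa> \<epsilon> s x' \<Longrightarrow> rep \<kappa> \<epsilon> s (x * x')"
proof -
  assume "rep \<kappa> \<epsilon> s x" "rep \<kappa> \<epsilon> s x'"
  then obtain ps ps' where "good \<kappa> \<epsilon> s ps" "cg (tens_rels \<kappa> s) x (\<Sum>(y, z) \<leftarrow> ps. iota1 y * iota2 z)"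
    "good \<kappa> \<epsilon> s ps'" "cg (tens_rels \<kappa> s) x' (\<Sum>(y, z) \<leftarrow> ps'. iota1 y * iota2 z)"
    unfolding rep_def by blast
  then show ?thesis using rep_lists rep_cg cg_mult2 by blast
qed

lemma part2:
  assumes "x \<in> twisted_subalg \<kappa> \<epsilon>"
  shows "rep \<kappa> \<epsilon> s (Delta \<kappa> x)"
  using assms unfolding twisted_subalg_def
proof (induct x rule: subalg_gen.induct)
  case (gen x)
  then obtain r i j where x: "x = bc \<kappa> \<epsilon> r i j" and ij: "i < \<kappa>" "j < \<kappa>" by blast
  let ?T = "(\<Sum>a<\<kappa>. \<Sum>c<\<kappa>.
                 fa_const (sgn ((par s c + par s j) * (par s a + par s c))) \<cdot>
                 (\<Sum>p\<le>r. \<Sum>q\<le>r - p.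
                    fa_const (sgn q) \<cdot> (iota1 (tc p i a \<cdot> tpc \<kappa> q c j)
                      \<cdot> iota2 (bc \<kappa> \<epsilon> (r - p - q) a c))))"
  have c: "cg (tens_rels \<kappa> s) (Delta \<kappa> x) ?T"
    using part1[OF ij(1), of \<epsilon> r j s] x by (simp add: cg_def tens_ideal_def)
  have "rep \<kappa> \<epsilon> s ?T"
    unfolding fa_mult_eq fa_const_eq sc_sgn sum_distrib_left
  proof (intro rep_sum)
    fix a c p q assume a: "a \<in> {..<\<kappa>}" and cc: "c \<in> {..<\<kappa>}"
    have "(-1) ^ ((par s c + par s j) * (par s a + par s c)) * ((-1) ^ q * (iota1 (tc p i a * tpc \<kappa> q c j) * iota2 (bc \<kappa> \<epsilon> (r - p - q) a c)))
      = iota1 ((-1) ^ ((par s c + par s j) * (par s a + par s c) + q) * (tc p i a * tpc \<kappa> q c j)) * iota2 (bc \<kappa> \<epsilon> (r - p - q) a c)"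
      by (simp add: iota1_def fa_hom_mult fa_hom_m1 power_add mult.assoc)
    moreover have "rep \<kappa> \<epsilon> s (iota1 ((-1) ^ ((par s c + par s j) * (par s a + par s c) + q) * (tc p i a * tpc \<kappa> q c j)) * iota2 (bc \<kappa> \<epsilon> (r - p - q) a c))"
      using a cc by (intro rep_pair[OF bc_ts homog_scal[OF homog_m1pow homog_mult[OF homog_tc homog_tpc]] homog_bc]) auto
    ultimately show "rep \<kappa> \<epsilon> s ((-1) ^ ((par s c + par s j) * (par s a + par s c)) * ((-1) ^ q * (iota1 (tc p i a * tpc \<kappa> q c j) * iota2 (bc \<kappa> \<epsilon> (r - p - q) a c))))"
      by simp
  qed
  then show ?case using rep_cg[OF c] by blast
next
  case (const c)
  have "Delta \<kappa> (fa_const c) = iota1 (sc c) * iota2 1"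
    by (simp add: Delta_def iota1_def iota2_def fa_const_eq fa_hom_sc)
  moreover have "rep \<kappa> \<epsilon> s (iota1 (sc c) * iota2 1)"
    using subalg_gen.const[of 1] by (intro rep_pair[of _ _ _ _ 0 _ 0] homog_sc homog_1)
       (auto simp: twisted_subalg_def fa_const_eq)
  ultimately show ?case by simp
next
  case (add x y)
  then show ?case by (simp add: Delta_def fa_hom_add rep_add)
next
  case (mult x y)
  then show ?case by (simp add: Delta_def fa_mult_eq fa_hom_mult rep_mult)
qed

theorem proposition3p5:
  fixes m n :: nat and s \<epsilon> :: "nat \<Rightarrow> int"
  assumes "\<forall>i < m + n. s i = 1 \<or> s i = -1"
    and "card {i. i < m + n \<and> s i = 1} = m"
    and "\<forall>i < m + n. \<epsilon> i = 1 \<or> \<epsilon> i = -1"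
  shows "(\<forall>r i j. i < m + n \<longrightarrow> j < m + n \<longrightarrow>
            Delta (m + n) (bc (m + n) \<epsilon> r i j)
            - (\<Sum>a<m + n. \<Sum>c<m + n.
                 fa_const (sgn ((par s c + par s j) * (par s a + par s c))) \<cdot>
                 (\<Sum>p\<le>r. \<Sum>q\<le>r - p.
                    fa_const (sgn q) \<cdot> (iota1 (tc p i a \<cdot> tpc (m + n) q c j)
                      \<cdot> iota2 (bc (m + n) \<epsilon> (r - p - q) a c))))
            \<in> tens_ideal (m + n) s)
       \<and> (\<forall>x \<in> twisted_subalg (m + n) \<epsilon>. \<exists>ps :: (ygen fa \<times> ygen fa) list.
            (\<forall>(y, z) \<in> set ps. z \<in> twisted_subalg (m + n) \<epsilon>) \<and>
            Delta (m + n) x - (\<Sum>(y, z) \<leftarrow> ps. iota1 y \<cdot> iota2 z) \<in> tens_ideal (m + n) s)"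
proof (intro conjI allI impI ballI)
  fix r i j assume ij: "i < m + n" "j < m + n"
  show "Delta (m + n) (bc (m + n) \<epsilon> r i j)
            - (\<Sum>a<m + n. \<Sum>c<m + n.
                 fa_const (sgn ((par s c + par s j) * (par s a + par s c))) \<cdot>
                 (\<Sum>p\<le>r. \<Sum>q\<le>r - p.
                    fa_const (sgn q) \<cdot> (iota1 (tc p i a \<cdot> tpc (m + n) q c j)
                      \<cdot> iota2 (bc (m + n) \<epsilon> (r - p - q) a c))))
            \<in> tens_ideal (m + n) s" by (rule part1[OF ij(1)])
next
  fix x assume "x \<in> twisted_subalg (m + n) \<epsilon>"
  then have "rep (m + n) \<epsilon> s (Delta (m + n) x)" by (rule part2)
  then obtain ps where "good (m + n) \<epsilon> s ps"
    "cg (tens_rels (m + n) s) (Delta (m + n) x) (\<Sum>(y, z) \<leftarrow> ps. iota1 y * iota2 z)"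
    unfolding rep_def by blast
  then show "\<exists>ps :: (ygen fa \<times> ygen fa) list.
            (\<forall>(y, z) \<in> set ps. z \<in> twisted_subalg (m + n) \<epsilon>) \<and>
            Delta (m + n) x - (\<Sum>(y, z) \<leftarrow> ps. iota1 y \<cdot> iota2 z) \<in> tens_ideal (m + n) s"
    by (intro exI[of _ ps]) (auto simp: good_def cg_def tens_ideal_def fa_mult_eq)
qed

end
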